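(* Let $F$ be a field and $A$ a quadratic $F$-algebra. (1) If $a,b\in A$ and $B=\mathrm{span}\{1,a,b\}$ satisfies $ab\in B$, then $B$ is a subalgebra of $A$. (2) $A$ is von-Neumann finite (respectively, reversible) if and only if every $3$-dimensional subalgebra of $A$ is von-Neumann finite (respectively, reversible). (3) $A$ is both von-Neumann finite and reversible if and only if every $3$-dimensional subalgebra of $A$ is commutative.
   Context: An $F$-algebra is a vector space with bilinear, not necessarily associative, multiplication. $A$ is quadratic if it is unital and $1,a,a^2$ are linearly dependent for all $a\in A$. $A$ is von-Neumann finite if $ab=1$ implies $ba=1$, and reversible if $ab=0$ implies $ba=0$, for all $a,b\in A$. *)

theory Defs
  imports Main "HOL.Vector_Spaces"
begin

definition f_algebra :: "('k::field \<Rightarrow> 'v::ab_group_add \<Rightarrow> 'v) \<Rightarrow> ('v \<Rightarrow> 'v \<Rightarrow> 'v) \<Rightarrow> bool" where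
  "f_algebra scale mul \<longleftrightarrow> vector_space scale \<and>
     (\<forall>x y z. mul (x + y) z = mul x z + mul y z) \<and>
     (\<forall>x y z. mul x (y + z) = mul x y + mul x z) \<and>
     (\<forall>c x y. mul (scale c x) y = scale c (mul x y)) \<and>
     (\<forall>c x y. mul x (scale c y) = scale c (mul x y))"

definition quadratic_algebra :: "('k::field \<Rightarrow> 'v::ab_group_add \<Rightarrow> 'v) \<Rightarrow> ('v \<Rightarrow> 'v \<Rightarrow> 'v) \<Rightarrow> 'v \<Rightarrow> bool" where
  "quadratic_algebra scale mul e \<longleftrightarrow> f_algebra scale mul \<and>
     (\<forall>x. mul e x = x \<and> mul x e = x) \<and>
     (\<forall>a. \<exists>\<alpha> \<beta> \<gamma>. (\<alpha> \<noteq> 0 \<or> \<beta> \<noteq> 0 \<or> \<gamma> \<noteq> 0) \<and>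
            scale \<alpha> e + scale \<beta> a + scale \<gamma> (mul a a) = 0)"

definition subalgebra :: "('k::field \<Rightarrow> 'v::ab_group_add \<Rightarrow> 'v) \<Rightarrow> ('v \<Rightarrow> 'v \<Rightarrow> 'v) \<Rightarrow> 'v \<Rightarrow> 'v set \<Rightarrow> bool" where
  "subalgebra scale mul e B \<longleftrightarrow> module.subspace scale B \<and> e \<in> B \<and>
     (\<forall>x\<in>B. \<forall>y\<in>B. mul x y \<in> B)"

definition vn_finite_on :: "('v \<Rightarrow> 'v \<Rightarrow> 'v) \<Rightarrow> 'v \<Rightarrow> 'v set \<Rightarrow> bool" where
  "vn_finite_on mul e B \<longleftrightarrow> (\<forall>a\<in>B. \<forall>b\<in>B. mul a b = e \<longrightarrow> mul b a = e)"

definition reversible_on :: "('v \<Rightarrow> 'v \<Rightarrow> 'v::zero) \<Rightarrow> 'v set \<Rightarrow> bool" where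
  "reversible_on mul B \<longleftrightarrow> (\<forall>a\<in>B. \<forall>b\<in>B. mul a b = 0 \<longrightarrow> mul b a = 0)"

definition commutative_on :: "('v \<Rightarrow> 'v \<Rightarrow> 'v) \<Rightarrow> 'v set \<Rightarrow> bool" where
  "commutative_on mul B \<longleftrightarrow> (\<forall>a\<in>B. \<forall>b\<in>B. mul a b = mul b a)"

end

theory Submission
  imports Defs
begin

locale qalg =
  fixes scale :: "'k::field \<Rightarrow> 'v::ab_group_add \<Rightarrow> 'v"
    and mul :: "'v \<Rightarrow> 'v \<Rightarrow> 'v"
    and e :: 'v
  assumes qa: "quadratic_algebra scale mul e"
begin

sublocale vector_space scale
  using qa by (simp add: quadratic_algebra_def f_algebra_def)

lemma addL: "mul (x + y) z = mul x z + mul y z"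
  using qa by (simp add: quadratic_algebra_def f_algebra_def)
lemma addR: "mul x (y + z) = mul x y + mul x z"
  using qa by (simp add: quadratic_algebra_def f_algebra_def)
lemma scL: "mul (scale c x) y = scale c (mul x y)"
  using qa by (simp add: quadratic_algebra_def f_algebra_def)
lemma scR: "mul x (scale c y) = scale c (mul x y)"
  using qa by (simp add: quadratic_algebra_def f_algebra_def)
lemma unitL: "mul e x = x"
  using qa by (simp add: quadratic_algebra_def)
lemma unitR: "mul x e = x"
  using qa by (simp add: quadratic_algebra_def)
lemma quad: "\<exists>\<alpha> \<beta> \<gamma>. (\<alpha> \<noteq> 0 \<or> \<beta> \<noteq> 0 \<or> \<gamma> \<noteq> 0) \<and>
            scale \<alpha> e + scale \<beta> a + scale \<gamma> (mul a a) = 0"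
  using qa by (simp add: quadratic_algebra_def)

lemma zeroL: "mul 0 y = 0"
  using addL[of 0 0 y] by simp
lemma zeroR: "mul y 0 = 0"
  using addR[of y 0 0] by simp
lemma diffL: "mul (x - y) z = mul x z - mul y z"
  using addL[of "x - y" y z] by (simp add: algebra_simps)
lemma diffR: "mul z (x - y) = mul z x - mul z y"
  using addR[of z "x - y" y] by (simp add: algebra_simps)

lemmas msimps = addL addR scL scR unitL unitR zeroL zeroR diffL diffR

lemma e_zero: "e = 0 \<Longrightarrow> (x::'v) = 0"
  using unitL[of x] zeroL[of x] by simp

lemma sq_span: "mul a a \<in> span {e, a}"
proof -
  obtain \<alpha> \<beta> \<gamma> where nt: "\<alpha> \<noteq> 0 \<or> \<beta> \<noteq> 0 \<or> \<gamma> \<noteq> 0"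
    and eq: "scale \<alpha> e + scale \<beta> a + scale \<gamma> (mul a a) = 0" using quad by blast
  have se: "e \<in> span {e,a}" and sa: "a \<in> span {e,a}" by (auto intro: span_base)
  show ?thesis
  proof (cases "\<gamma> = 0")
    case False
    have "scale \<gamma> (mul a a) = - (scale \<alpha> e + scale \<beta> a)" using eq
      by (metis add.commute eq_neg_iff_add_eq_0)
    then have "mul a a = scale (inverse \<gamma>) (- (scale \<alpha> e + scale \<beta> a))"
      using False by (metis scale_scale left_inverse scale_one)
    then show ?thesis using se sa by (metis span_scale span_neg span_add)
  next
    case True
    note g = True
    show ?thesis
    proof (cases "\<beta> = 0")
      case False
      have "scale \<beta> a = - scale \<alpha> e" using eq g
        by (metis add.commute add_0_right scale_zero_left eq_neg_iff_add_eq_0)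
      then have "a = scale (inverse \<beta>) (- scale \<alpha> e)"
        using False by (metis scale_scale left_inverse scale_one)
      then have "a = scale (- (inverse \<beta> * \<alpha>)) e"
        by (simp add: scale_scale scale_minus_left scale_minus_right)
      then have "mul a a = scale (- (inverse \<beta> * \<alpha>)) a"
        by (metis scR unitR)
      then show ?thesis using sa by (metis span_scale)
    next
      case True
      with g nt eq have "e = 0" by simp
      then show ?thesis using e_zero span_zero by metis
    qed
  qed
qed

lemma span2_repr: "x \<in> span {e, c} \<Longrightarrow> \<exists>p q. x = scale p e + scale q c"
  by (auto simp: span_insert span_singleton) (metis diff_add_cancel add.commute)

lemma comm_span2:
  assumes "x \<in> span {e, c}" "y \<in> span {e, c}"
  shows "mul x y = mul y x"
proof -
  obtain p q where x: "x = scale p e + scale q c" using span2_repr assms(1) by blast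
  obtain r s where y: "y = scale r e + scale s c" using span2_repr assms(2) by blast
  show ?thesis unfolding x y
    by (simp add: msimps scale_scale algebra_simps mult.commute)
qed

lemma noncomm_indep:
  assumes nc: "mul a b \<noteq> mul b a"
  shows "independent {e, a, b}" "card {e, a, b} = 3"
proof -
  have e0: "e \<noteq> 0" using nc e_zero by metis
  have a1: "a \<notin> span {e}"
  proof
    assume "a \<in> span {e}"
    then have "a \<in> span {e, b}" using span_mono[of "{e}" "{e,b}"] by blast
    moreover have "b \<in> span {e, b}" by (auto intro: span_base)
    ultimately show False using comm_span2 nc by blast
  qed
  have b1: "b \<notin> span {e, a}"
  proof
    assume "b \<in> span {e, a}"
    moreover have "a \<in> span {e, a}" by (auto intro: span_base)
    ultimately show False using comm_span2 nc by blast
  qed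
  have ae: "a \<noteq> e" using a1 span_base by blast
  have ba: "b \<noteq> a" "b \<noteq> e" using b1 span_base by blast+
  have "independent {e}" using e0 by (simp add: independent_insert)
  then have "independent {a, e}" using a1 ae by (simp add: independent_insert)
  moreover have "b \<notin> span {a, e}" using b1 by (simp add: insert_commute)
  ultimately have "independent (insert b {a, e})" by (metis independent_insertI)
  then show "independent {e, a, b}" by (simp add: insert_commute)
  show "card {e, a, b} = 3" using ae ba by auto
qed

lemma noncomm_dim:
  assumes "mul a b \<noteq> mul b a"
  shows "dim (span {e, a, b}) = 3"
  using noncomm_indep[OF assms] by (simp add: dim_eq_card_independent)

lemma mul_span_closed:
  assumes gen: "\<And>s t. s \<in> S \<Longrightarrow> t \<in> S \<Longrightarrow> mul s t \<in> span S"
    and x: "x \<in> span S" and y: "y \<in> span S"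
  shows "mul x y \<in> span S"
proof -
  have L: "mul x' t \<in> span S" if "x' \<in> span S" "t \<in> S" for x' t
    using that(1)
  proof (induct rule: span_induct)
    case base
    show ?case by (rule subspaceI) (auto simp: msimps intro: span_add span_scale span_zero)
  next
    case (step s) then show ?case using gen that(2) by blast
  qed
  show ?thesis using y
  proof (induct rule: span_induct)
    case base
    show ?case by (rule subspaceI) (auto simp: msimps intro: span_add span_scale span_zero)
  next
    case (step t) then show ?case using L x by blast
  qed
qed

lemma part1:
  assumes ab: "mul a b \<in> span {e, a, b}"
  shows "subalgebra scale mul e (span {e, a, b})"
proof -
  let ?S = "{e, a, b}"
  have sub: "span {e, c} \<subseteq> span ?S" if "c \<in> ?S" for c
    using that by (intro span_mono) auto
  have aa: "mul a a \<in> span ?S" using sq_span sub by blast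
  have bb: "mul b b \<in> span ?S" using sq_span sub by blast
  have "a + b \<in> span ?S" by (auto intro: span_add span_base)
  then have "span {e, a + b} \<subseteq> span ?S"
    by (intro span_minimal) (auto intro: span_base)
  then have ab2: "mul (a+b) (a+b) \<in> span ?S" using sq_span by blast
  have "mul b a = mul (a+b) (a+b) - mul a a - mul a b - mul b b"
    by (simp add: msimps algebra_simps)
  then have ba: "mul b a \<in> span ?S" using ab2 aa bb ab by (metis span_diff)
  have gen: "mul s t \<in> span ?S" if "s \<in> ?S" "t \<in> ?S" for s t
    using that aa bb ab ba by (auto simp: msimps intro: span_base)
  show ?thesis unfolding subalgebra_def
    using mul_span_closed[OF gen] by (auto intro: span_base)
qed

lemma fill_dim3:
  assumes sB: "subspace B" and d: "dim B = 3" and SB: "S \<subseteq> B"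
    and iS: "independent S" and cS: "card S = 3"
  shows "B \<subseteq> span S"
proof
  fix x assume xB: "x \<in> B"
  show "x \<in> span S"
  proof (rule ccontr)
    assume nx: "x \<notin> span S"
    obtain A where A: "A \<subseteq> B" "independent A" "B \<subseteq> span A" "card A = dim B"
      using basis_exists by blast
    have fA: "finite A" using A(4) d by (intro card_ge_0_finite) simp
    have fS: "finite S" using cS by (intro card_ge_0_finite) simp
    have xS: "x \<notin> S" using nx span_base by blast
    have ii: "independent (insert x S)" using nx iS xS by (simp add: independent_insert)
    have "insert x S \<subseteq> span A" using A(3) SB xB by blast
    then have "card (insert x S) \<le> card A" using independent_span_bound[OF fA ii] by simp
    then show False using A(4) d cS fS xS by simp
  qed
qed

lemma coeffs3: "x \<in> span {e, a, b} \<Longrightarrow> \<exists>p q r. x = scale p e + scale q a + scale r b"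
  by (auto simp: span_insert span_singleton) (metis diff_add_cancel add.commute add.assoc)

lemma vr_comm:
  assumes vn: "vn_finite_on mul e UNIV" and rv: "reversible_on mul UNIV"
    and ab: "mul a b \<in> span {e, a, b}"
  shows "mul a b = mul b a"
proof -
  obtain p q r where pqr: "mul a b = scale p e + scale q a + scale r b" using coeffs3 ab by blast
  define x where "x = a - scale r e"
  define y where "y = b - scale q e"
  define d where "d = p + q * r"
  have xy: "mul x y = scale d e"
    unfolding x_def y_def d_def by (simp add: msimps pqr algebra_simps scale_scale)
  have yx: "mul y x = mul b a - scale r b - scale q a + scale (q * r) e"
    unfolding x_def y_def by (simp add: msimps algebra_simps scale_scale)
  have "mul y x = mul x y"
  proof (cases "d = 0")
    case True
    then show ?thesis using rv xy unfolding reversible_on_def by simp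
  next
    case False
    have "mul x (scale (inverse d) y) = e" using False xy by (simp add: scR scale_scale)
    then have "mul (scale (inverse d) y) x = e" using vn unfolding vn_finite_on_def by blast
    then have "scale d (mul (scale (inverse d) y) x) = scale d e" by simp
    then show ?thesis using False xy by (simp add: scL scale_scale)
  qed
  then show ?thesis using yx xy pqr unfolding d_def
    by (simp add: algebra_simps scale_scale)
qed

end

theorem lemma3p4:
  fixes scale :: "'k::field \<Rightarrow> 'v::ab_group_add \<Rightarrow> 'v"
    and mul :: "'v \<Rightarrow> 'v \<Rightarrow> 'v"
    and e :: 'v
  assumes "quadratic_algebra scale mul e"
  shows "(\<forall>a b. mul a b \<in> module.span scale {e, a, b}
            \<longrightarrow> subalgebra scale mul e (module.span scale {e, a, b}))
       \<and> (vn_finite_on mul e UNIV \<longleftrightarrow>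
            (\<forall>B. subalgebra scale mul e B \<and> vector_space.dim scale B = 3 \<longrightarrow> vn_finite_on mul e B))
       \<and> (reversible_on mul UNIV \<longleftrightarrow>
            (\<forall>B. subalgebra scale mul e B \<and> vector_space.dim scale B = 3 \<longrightarrow> reversible_on mul B))
       \<and> (vn_finite_on mul e UNIV \<and> reversible_on mul UNIV \<longleftrightarrow>
            (\<forall>B. subalgebra scale mul e B \<and> vector_space.dim scale B = 3 \<longrightarrow> commutative_on mul B))"
proof -
  interpret qalg scale mul e by unfold_locales (rule assms)
  have P1: "\<forall>a b. mul a b \<in> span {e, a, b} \<longrightarrow> subalgebra scale mul e (span {e, a, b})"
    using part1 by blast
  have key: "\<And>a b. mul a b \<noteq> mul b a \<Longrightarrow> mul a b \<in> span {e, a, b} \<Longrightarrow>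
      subalgebra scale mul e (span {e, a, b}) \<and> dim (span {e, a, b}) = 3 \<and> a \<in> span {e,a,b} \<and> b \<in> span {e,a,b}"
    using part1 noncomm_dim by (auto intro: span_base)
  have P2: "vn_finite_on mul e UNIV \<longleftrightarrow>
            (\<forall>B. subalgebra scale mul e B \<and> dim B = 3 \<longrightarrow> vn_finite_on mul e B)"
  proof
    assume "vn_finite_on mul e UNIV" then show "\<forall>B. subalgebra scale mul e B \<and> dim B = 3 \<longrightarrow> vn_finite_on mul e B"
      by (simp add: vn_finite_on_def)
  next
    assume H: "\<forall>B. subalgebra scale mul e B \<and> dim B = 3 \<longrightarrow> vn_finite_on mul e B"
    show "vn_finite_on mul e UNIV" unfolding vn_finite_on_def
    proof (intro ballI impI)
      fix a b assume ab: "mul a b = e"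
      show "mul b a = e"
      proof (cases "mul a b = mul b a")
        case True then show ?thesis using ab by simp
      next
        case False
        have "mul a b \<in> span {e, a, b}" using ab by (auto intro: span_base)
        from key[OF False this] H ab show ?thesis unfolding vn_finite_on_def by blast
      qed
    qed
  qed
  have P3: "reversible_on mul UNIV \<longleftrightarrow>
            (\<forall>B. subalgebra scale mul e B \<and> dim B = 3 \<longrightarrow> reversible_on mul B)"
  proof
    assume "reversible_on mul UNIV" then show "\<forall>B. subalgebra scale mul e B \<and> dim B = 3 \<longrightarrow> reversible_on mul B"
      by (simp add: reversible_on_def)
  next
    assume H: "\<forall>B. subalgebra scale mul e B \<and> dim B = 3 \<longrightarrow> reversible_on mul B"
    show "reversible_on mul UNIV" unfolding reversible_on_def
    proof (intro ballI impI)
      fix a b assume ab: "mul a b = 0"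
      show "mul b a = 0"
      proof (cases "mul a b = mul b a")
        case True then show ?thesis using ab by simp
      next
        case False
        have "mul a b \<in> span {e, a, b}" using ab by (simp add: span_zero)
        from key[OF False this] H ab show ?thesis unfolding reversible_on_def by blast
      qed
    qed
  qed
  have P4: "vn_finite_on mul e UNIV \<and> reversible_on mul UNIV \<longleftrightarrow>
            (\<forall>B. subalgebra scale mul e B \<and> dim B = 3 \<longrightarrow> commutative_on mul B)"
  proof
    assume H: "vn_finite_on mul e UNIV \<and> reversible_on mul UNIV"
    show "\<forall>B. subalgebra scale mul e B \<and> dim B = 3 \<longrightarrow> commutative_on mul B"
    proof (intro allI impI)
      fix B assume B: "subalgebra scale mul e B \<and> dim B = 3"
      show "commutative_on mul B" unfolding commutative_on_def
      proof (intro ballI)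
        fix a b assume a: "a \<in> B" and b: "b \<in> B"
        show "mul a b = mul b a"
        proof (rule ccontr)
          assume nc: "mul a b \<noteq> mul b a"
          have "B \<subseteq> span {e, a, b}"
            using B a b noncomm_indep[OF nc] unfolding subalgebra_def
            by (intro fill_dim3) auto
          moreover have "mul a b \<in> B" using B a b unfolding subalgebra_def by blast
          ultimately have "mul a b \<in> span {e, a, b}" by blast
          then show False using vr_comm H nc by blast
        qed
      qed
    qed
  next
    assume H: "\<forall>B. subalgebra scale mul e B \<and> dim B = 3 \<longrightarrow> commutative_on mul B"
    then have "\<forall>B. subalgebra scale mul e B \<and> dim B = 3 \<longrightarrow> vn_finite_on mul e B"
      "\<forall>B. subalgebra scale mul e B \<and> dim B = 3 \<longrightarrow> reversible_on mul B"
      unfolding commutative_on_def vn_finite_on_def reversible_on_def by metis+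
    then show "vn_finite_on mul e UNIV \<and> reversible_on mul UNIV" using P2 P3 by blast
  qed
  show ?thesis using P1 P2 P3 P4 by blast
qed

end
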